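(* Consider the controlled system below. (i) For any ${\sf a}\in\mathcal{A}$ there exists $\tilde{\sf a}\in\mathcal{A}^R$ such that $X_t^R({\sf a})=X_t^R(\tilde{\sf a})$ for all $t\in\{0,\dots,T\}$ almost surely. (ii) For any $\tilde{\sf a}\in\mathcal{A}^R$ there exists ${\sf a}\in\mathcal{A}$ such that $X_t^R({\sf a})=X_t^R(\tilde{\sf a})$ for all $t\in\{0,\dots,T\}$ almost surely.
   Context: Setting: $\mathcal{T}=\{0,\dots,T\}$, $\mathcal{T}_0=\{0,\dots,T-1\}$, probability space $(\Omega,\mathcal{F},\mathbb{P})$ with filtration $\{\mathcal{F}_t\}$; $\varepsilon_1,\dots,\varepsilon_T$ independent $\mathbb{R}^q$-valued random variables ($\varepsilon_{t+1}$ being $\mathcal{F}_{t+1}$-measurable); measurable $K:\mathbb{R}^{d+p}\to\mathbb{R}^r$, $H:\mathbb{R}^{r+q}\to\mathbb{R}^d$; for each $t\in\mathcal{T}_0$ a set-valued map $x\mapsto A_t(x)\subseteq\mathbb{R}^p$ and a reward $f_t(x,a)$. For an action process ${\sf a}=\{a_t\}_{t\in\mathcal{T}_0}$ the state process $X({\sf a})$ valued in $\mathcal{X}\subseteq\mathbb{R}^d$ is $X_0$ given, $X_{t+1}=H(K(X_t,a_t),\varepsilon_{t+1})$. $\mathcal{A}$ is the set of ${\sf a}$ with $a_t$ $\mathcal{F}_t$-measurable and $a_t\in A_t(X_t({\sf a}))$ for all $t\in\mathcal{T}_0$. Truncation: $\mathcal{X}_R\subseteq\mathcal{X}$ bounded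 with interior $\mathring{\mathcal{X}}_R$, boundary $\partial\mathcal{X}_R$, compact strictly convex closure; $X_0\in\mathring{\mathcal{X}}_R$; $\mathcal{Q}$ the Euclidean nearest-point projection onto $\mathrm{cl}(\mathcal{X}_R)$; $\tilde H(k,e)=\mathcal{Q}(H(k,e))$ if $H(k,e)\notin\mathring{\mathcal{X}}_R$, else $H(k,e)$. For any adapted ${\sf a}$, $X^R({\sf a})$ is defined by $X^R_0=X_0$ and $X_{t+1}^R=X_t^R\mathbb{I}_{\{X_t^R\in\partial\mathcal{X}_R\}}+\tilde H(K(X_t^R,a_t),\varepsilon_{t+1})\mathbb{I}_{\{X_t^R\in\mathring{\mathcal{X}}_R\}}$ (equivalently $X_t^R=X_t\mathbb{I}_{\{\tau^R>t\}}+\mathcal{Q}(X_{\tau^R\wedge t})\mathbb{I}_{\{\tau^R\le t\}}$ with $\tau^R$ the first time $t$ with $X_t\notin\mathring{\mathcal{X}}_R$). $\mathcal{A}^R$ is the set of ${\sf a}$ with $a_t$ $\mathcal{F}_t$-measurable and $a_t\in A_t(X_t^R({\sf a}))$ for all $t\in\mathcal{T}_0$. Standing assumption: for each $t\in\mathcal{T}_0$ there is a measurable $a_t^*$ with $a_t^*(x)\in\arg\max_{a\in A_t(x)}f_t(x,a)$ for $x\in\partial\mathcal{X}_R$, and a measurable $\hat a_t$ with $\hat a_t(x)\in A_t(x)$ for all $x\in\mathcal{X}$. *)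

theory Defs
  imports "HOL-Probability.Probability"
begin

fun state_proc :: "('r \<Rightarrow> 'q \<Rightarrow> 'd) \<Rightarrow> ('d \<times> 'p \<Rightarrow> 'r) \<Rightarrow> 'd \<Rightarrow> (nat \<Rightarrow> 'w \<Rightarrow> 'q)
    \<Rightarrow> (nat \<Rightarrow> 'w \<Rightarrow> 'p) \<Rightarrow> nat \<Rightarrow> 'w \<Rightarrow> 'd" where
  "state_proc H K x0 eps a 0 \<omega> = x0"
| "state_proc H K x0 eps a (Suc t) \<omega> =
     H (K (state_proc H K x0 eps a t \<omega>, a t \<omega>)) (eps (Suc t) \<omega>)"

definition proj_R :: "'d::euclidean_space set \<Rightarrow> 'd \<Rightarrow> 'd" where
  "proj_R XR y = closest_point (closure XR) y"

definition H_tilde :: "'d::euclidean_space set \<Rightarrow> ('r \<Rightarrow> 'q \<Rightarrow> 'd) \<Rightarrow> 'r \<Rightarrow> 'q \<Rightarrow> 'd" where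
  "H_tilde XR H k e = (if H k e \<notin> interior XR then proj_R XR (H k e) else H k e)"

fun trunc_proc :: "'d::euclidean_space set \<Rightarrow> ('r \<Rightarrow> 'q \<Rightarrow> 'd) \<Rightarrow> ('d \<times> 'p \<Rightarrow> 'r) \<Rightarrow> 'd
    \<Rightarrow> (nat \<Rightarrow> 'w \<Rightarrow> 'q) \<Rightarrow> (nat \<Rightarrow> 'w \<Rightarrow> 'p) \<Rightarrow> nat \<Rightarrow> 'w \<Rightarrow> 'd" where
  "trunc_proc XR H K x0 eps a 0 \<omega> = x0"
| "trunc_proc XR H K x0 eps a (Suc t) \<omega> =
     (let x = trunc_proc XR H K x0 eps a t \<omega> in
      (if x \<in> frontier XR then x else 0)
      + (if x \<in> interior XR then H_tilde XR H (K (x, a t \<omega>)) (eps (Suc t) \<omega>) else 0))"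

definition strictly_convex_set :: "'d::euclidean_space set \<Rightarrow> bool" where
  "strictly_convex_set C \<longleftrightarrow> (\<forall>x\<in>C. \<forall>y\<in>C. \<forall>u::real. x \<noteq> y \<and> 0 < u \<and> u < 1
      \<longrightarrow> u *\<^sub>R x + (1 - u) *\<^sub>R y \<in> interior C)"

definition adm :: "'w measure \<Rightarrow> (nat \<Rightarrow> 'w measure) \<Rightarrow> nat \<Rightarrow> (nat \<Rightarrow> 'd \<Rightarrow> 'p::euclidean_space set)
    \<Rightarrow> ('r \<Rightarrow> 'q \<Rightarrow> 'd) \<Rightarrow> ('d \<times> 'p \<Rightarrow> 'r) \<Rightarrow> 'd \<Rightarrow> (nat \<Rightarrow> 'w \<Rightarrow> 'q)
    \<Rightarrow> (nat \<Rightarrow> 'w \<Rightarrow> 'p) set" where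
  "adm M F T A H K x0 eps = {a. \<forall>t<T. a t \<in> borel_measurable (F t) \<and>
      (\<forall>\<omega>\<in>space M. a t \<omega> \<in> A t (state_proc H K x0 eps a t \<omega>))}"

definition adm_R :: "'w measure \<Rightarrow> (nat \<Rightarrow> 'w measure) \<Rightarrow> nat \<Rightarrow> 'd::euclidean_space set
    \<Rightarrow> (nat \<Rightarrow> 'd \<Rightarrow> 'p::euclidean_space set)
    \<Rightarrow> ('r \<Rightarrow> 'q \<Rightarrow> 'd) \<Rightarrow> ('d \<times> 'p \<Rightarrow> 'r) \<Rightarrow> 'd \<Rightarrow> (nat \<Rightarrow> 'w \<Rightarrow> 'q)
    \<Rightarrow> (nat \<Rightarrow> 'w \<Rightarrow> 'p) set" where
  "adm_R M F T XR A H K x0 eps = {a. \<forall>t<T. a t \<in> borel_measurable (F t) \<and>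
      (\<forall>\<omega>\<in>space M. a t \<omega> \<in> A t (trunc_proc XR H K x0 eps a t \<omega>))}"

end

theory Submission
  imports Defs
begin


lemma strict_convex_imp_convex:
  assumes "strictly_convex_set C" shows "convex C"
proof (rule convexI)
  fix x y u v assume xy: "x \<in> C" "y \<in> C" and uv: "0 \<le> u" "0 \<le> v" "u + v = (1::real)"
  show "u *\<^sub>R x + v *\<^sub>R y \<in> C"
  proof (cases "x = y \<or> u = 0 \<or> u = 1")
    case True
    then show ?thesis using xy uv
      by (auto simp flip: scaleR_add_left)
  next
    case False
    then have "u *\<^sub>R x + (1 - u) *\<^sub>R y \<in> interior C"
      using assms xy uv unfolding strictly_convex_set_def by auto
    then show ?thesis using uv interior_subset by (metis add_diff_cancel_left' subsetD)
  qed
qed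

lemma proj_frontier:
  fixes XR :: "'d::euclidean_space set"
  assumes cvx: "convex (closure XR)" and ne: "interior XR \<noteq> {}" and y: "y \<notin> interior XR"
  shows "proj_R XR y \<in> frontier XR"
proof (cases "y \<in> closure XR")
  case True
  then show ?thesis using y by (simp add: proj_R_def closest_point_self frontier_def)
next
  case False
  have ahu: "affine hull (closure XR) = UNIV"
    by (rule affine_hull_nonempty_interior) (use ne interior_mono closure_subset in blast)
  have "closest_point (closure XR) y \<in> rel_frontier (closure XR)"
    apply (rule closest_point_in_rel_frontier)
    using ne False rel_interior_subset[of "closure XR"] ahu by (auto simp: interior_subset)
  also have "rel_frontier (closure XR) = frontier (closure XR)"
    by (rule rel_frontier_frontier[OF ahu])
  also have "\<dots> \<subseteq> frontier XR"
    using interior_mono[OF closure_subset[of XR]] by (auto simp: frontier_def)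
  finally show ?thesis by (simp add: proj_R_def)
qed

lemma H_tilde_props:
  fixes XR :: "'d::euclidean_space set"
  assumes cvx: "convex (closure XR)" and ne: "interior XR \<noteq> {}"
  shows "H_tilde XR H k e \<in> closure XR"
    and "H_tilde XR H k e \<in> interior XR \<Longrightarrow> H_tilde XR H k e = H k e"
  using proj_frontier[OF cvx ne, of "H k e"] interior_subset[of XR] closure_subset[of XR]
  by (auto simp: H_tilde_def frontier_def)

lemma trunc_closure:
  fixes XR :: "'d::euclidean_space set"
  assumes cvx: "convex (closure XR)" and x0: "x0 \<in> interior XR"
  shows "trunc_proc XR H K x0 eps a t \<omega> \<in> closure XR"
proof (induction t)
  case 0
  then show ?case using x0 interior_subset closure_subset by auto
next
  case (Suc t)
  have ne: "interior XR \<noteq> {}" using x0 by auto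
  show ?case using Suc H_tilde_props(1)[OF cvx ne] interior_subset[of XR]
    by (auto simp: Let_def frontier_def)
qed

lemma trunc_cong:
  assumes "\<And>s. s < t \<Longrightarrow> trunc_proc XR H K x0 eps b s \<omega> \<in> interior XR \<Longrightarrow> a s \<omega> = b s \<omega>"
  shows "trunc_proc XR H K x0 eps a t \<omega> = trunc_proc XR H K x0 eps b t \<omega>"
  using assms
proof (induction t)
  case 0
  then show ?case by simp
next
  case (Suc t)
  then have IH: "trunc_proc XR H K x0 eps a t \<omega> = trunc_proc XR H K x0 eps b t \<omega>" by auto
  show ?case using IH Suc.prems[of t] by (simp add: Let_def)
qed

lemma trunc_interior_state:
  fixes XR :: "'d::euclidean_space set"
  assumes cvx: "convex (closure XR)" and x0: "x0 \<in> interior XR"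
  shows "trunc_proc XR H K x0 eps a t \<omega> \<in> interior XR \<Longrightarrow>
         trunc_proc XR H K x0 eps a t \<omega> = state_proc H K x0 eps a t \<omega>"
proof (induction t)
  case 0
  then show ?case by simp
next
  case (Suc t)
  have ne: "interior XR \<noteq> {}" using x0 by auto
  define x where "x = trunc_proc XR H K x0 eps a t \<omega>"
  have xc: "x \<in> closure XR" unfolding x_def by (rule trunc_closure[OF cvx x0])
  show ?case
  proof (cases "x \<in> interior XR")
    case True
    then have xnf: "x \<notin> frontier XR" by (simp add: frontier_def)
    have eq: "trunc_proc XR H K x0 eps a (Suc t) \<omega> = H_tilde XR H (K (x, a t \<omega>)) (eps (Suc t) \<omega>)"
      using True xnf by (simp add: Let_def x_def[symmetric])
    show ?thesis using Suc.prems eq H_tilde_props(2)[OF cvx ne] Suc.IH True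
      by (simp add: x_def)
  next
    case False
    then have "x \<in> frontier XR" using xc by (simp add: frontier_def)
    then have "trunc_proc XR H K x0 eps a (Suc t) \<omega> = x" using False by (simp add: Let_def x_def[symmetric])
    then show ?thesis using Suc.prems False by simp
  qed
qed

lemma lift_meas:
  assumes "sets N1 \<subseteq> sets N2" "space N1 = space N2" "f \<in> measurable N1 N"
  shows "f \<in> measurable N2 N"
  using assms unfolding measurable_def by auto

lemma pred_in:
  assumes "f \<in> borel_measurable N" "S \<in> sets borel"
  shows "{\<omega>\<in>space N. f \<omega> \<in> S} \<in> sets N"
proof -
  have "{\<omega>\<in>space N. f \<omega> \<in> S} = f -` S \<inter> space N" by auto
  then show ?thesis using measurable_sets[OF assms] by simp
qed

lemma meas_step:
  fixes K :: "'d::euclidean_space \<times> 'p::euclidean_space \<Rightarrow> 'r::euclidean_space"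
    and H :: "'r \<Rightarrow> 'q::euclidean_space \<Rightarrow> 'e::euclidean_space"
  assumes K_meas: "K \<in> borel_measurable borel"
    and H_meas: "(\<lambda>(k, e). H k e) \<in> borel_measurable borel"
    and X: "X \<in> borel_measurable N" and b: "b \<in> borel_measurable N" and e: "e \<in> borel_measurable N"
  shows "(\<lambda>\<omega>. H (K (X \<omega>, b \<omega>)) (e \<omega>)) \<in> borel_measurable N"
proof -
  have "(\<lambda>\<omega>. (X \<omega>, b \<omega>)) \<in> borel_measurable N" using X b by (rule borel_measurable_Pair)
  then have "(\<lambda>\<omega>. K (X \<omega>, b \<omega>)) \<in> borel_measurable N"
    using measurable_compose K_meas by blast
  then have "(\<lambda>\<omega>. (K (X \<omega>, b \<omega>), e \<omega>)) \<in> borel_measurable N" using e by (rule borel_measurable_Pair)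
  then have "(\<lambda>\<omega>. (\<lambda>(k, e). H k e) (K (X \<omega>, b \<omega>), e \<omega>)) \<in> borel_measurable N"
    using measurable_compose H_meas by blast
  then show ?thesis by simp
qed

lemma trunc_meas:
  fixes XR :: "'d::euclidean_space set"
    and K :: "'d \<times> 'p::euclidean_space \<Rightarrow> 'r::euclidean_space"
    and H :: "'r \<Rightarrow> 'q::euclidean_space \<Rightarrow> 'd"
  assumes cvx: "convex (closure XR)" and ne: "interior XR \<noteq> {}"
    and K_meas: "K \<in> borel_measurable borel"
    and H_meas: "(\<lambda>(k, e). H k e) \<in> borel_measurable borel"
    and mono: "\<And>s u. s \<le> u \<Longrightarrow> sets (F s) \<subseteq> sets (F u)"
    and sp: "\<And>s. space (F s) = S"
    and am: "\<And>s. s < t \<Longrightarrow> a s \<in> borel_measurable (F s)"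
    and em: "\<And>s. s \<in> {1..t} \<Longrightarrow> eps s \<in> borel_measurable (F s)"
  shows "trunc_proc XR H K x0 eps a t \<in> borel_measurable (F t)"
  using am em
proof (induction t)
  case 0
  then show ?case by simp
next
  case (Suc t)
  let ?N = "F (Suc t)"
  have x: "trunc_proc XR H K x0 eps a t \<in> borel_measurable ?N"
    using Suc by (intro lift_meas[OF mono sp[of t, folded sp[of "Suc t"]]]) auto
  have b: "a t \<in> borel_measurable ?N"
    using Suc.prems(1)[of t] by (intro lift_meas[OF mono sp[of t, folded sp[of "Suc t"]]]) auto
  have e: "eps (Suc t) \<in> borel_measurable ?N" using Suc.prems(2) by auto
  define X where "X = trunc_proc XR H K x0 eps a t"
  define Y where "Y = (\<lambda>\<omega>. H (K (X \<omega>, a t \<omega>)) (eps (Suc t) \<omega>))"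
  have Y: "Y \<in> borel_measurable ?N" unfolding Y_def X_def by (rule meas_step[OF K_meas H_meas x b e])
  have cl: "closed (closure XR)" by simp
  have ne2: "closure XR \<noteq> {}" using ne interior_subset closure_subset by blast
  have P: "(\<lambda>\<omega>. proj_R XR (Y \<omega>)) \<in> borel_measurable ?N"
    unfolding proj_R_def
    by (rule borel_measurable_continuous_on[OF continuous_on_closest_point[OF cvx cl ne2] Y])
  have HT: "(\<lambda>\<omega>. H_tilde XR H (K (X \<omega>, a t \<omega>)) (eps (Suc t) \<omega>)) \<in> borel_measurable ?N"
  proof -
    have "(\<lambda>\<omega>. if Y \<omega> \<notin> interior XR then proj_R XR (Y \<omega>) else Y \<omega>) \<in> borel_measurable ?N"
      by (rule measurable_If[OF P Y]) (rule sets.sets_Collect_neg[OF pred_in[OF Y]], simp)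
    then show ?thesis unfolding H_tilde_def Y_def by simp
  qed
  have XF: "(\<lambda>\<omega>. if X \<omega> \<in> frontier XR then X \<omega> else 0) \<in> borel_measurable ?N"
    by (rule measurable_If[OF x[folded X_def]]) (auto intro: pred_in[OF x[folded X_def]])
  have XI: "(\<lambda>\<omega>. if X \<omega> \<in> interior XR then H_tilde XR H (K (X \<omega>, a t \<omega>)) (eps (Suc t) \<omega>) else 0)
     \<in> borel_measurable ?N"
    by (rule measurable_If[OF HT]) (auto intro: pred_in[OF x[folded X_def]])
  have "trunc_proc XR H K x0 eps a (Suc t) = (\<lambda>\<omega>. (if X \<omega> \<in> frontier XR then X \<omega> else 0) +
     (if X \<omega> \<in> interior XR then H_tilde XR H (K (X \<omega>, a t \<omega>)) (eps (Suc t) \<omega>) else 0))"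
    by (rule ext) (simp add: X_def Let_def)
  then show ?case using borel_measurable_add[OF XF XI] by simp
qed

fun fb_proc :: "('r \<Rightarrow> 'q \<Rightarrow> 'd) \<Rightarrow> ('d \<times> 'p \<Rightarrow> 'r) \<Rightarrow> 'd \<Rightarrow> (nat \<Rightarrow> 'w \<Rightarrow> 'q)
    \<Rightarrow> (nat \<Rightarrow> 'w \<Rightarrow> 'd \<Rightarrow> 'p) \<Rightarrow> nat \<Rightarrow> 'w \<Rightarrow> 'd" where
  "fb_proc H K x0 eps g 0 \<omega> = x0"
| "fb_proc H K x0 eps g (Suc t) \<omega> =
     H (K (fb_proc H K x0 eps g t \<omega>, g t \<omega> (fb_proc H K x0 eps g t \<omega>))) (eps (Suc t) \<omega>)"

lemma state_fb:
  "state_proc H K x0 eps (\<lambda>t \<omega>. g t \<omega> (fb_proc H K x0 eps g t \<omega>)) t \<omega> = fb_proc H K x0 eps g t \<omega>"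
  by (induction t) auto


theorem lemma2:
  fixes M :: "'w measure" and F :: "nat \<Rightarrow> 'w measure" and T :: nat
    and eps :: "nat \<Rightarrow> 'w \<Rightarrow> 'q::euclidean_space"
    and K :: "'d::euclidean_space \<times> 'p::euclidean_space \<Rightarrow> 'r::euclidean_space"
    and H :: "'r \<Rightarrow> 'q \<Rightarrow> 'd"
    and A :: "nat \<Rightarrow> 'd \<Rightarrow> 'p set"
    and f :: "nat \<Rightarrow> 'd \<Rightarrow> 'p \<Rightarrow> real"
    and Xs XR :: "'d set" and x0 :: 'd
    and astar ahat :: "nat \<Rightarrow> 'd \<Rightarrow> 'p"
  assumes prob: "prob_space M"
    and filt_sub: "\<And>t. subalgebra M (F t)"
    and filt_mono: "\<And>s t. s \<le> t \<Longrightarrow> sets (F s) \<subseteq> sets (F t)"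
    and eps_meas: "\<And>t. t \<in> {1..T} \<Longrightarrow> eps t \<in> borel_measurable (F t)"
    and eps_indep: "prob_space.indep_vars M (\<lambda>_. borel) eps {1..T}"
    and K_meas: "K \<in> borel_measurable borel"
    and H_meas: "(\<lambda>(k, e). H k e) \<in> borel_measurable borel"
    and state_space: "\<And>t x b e. t < T \<Longrightarrow> x \<in> Xs \<Longrightarrow> b \<in> A t x \<Longrightarrow> H (K (x, b)) e \<in> Xs"
    and XR_sub: "XR \<subseteq> Xs"
    and XR_bounded: "bounded XR"
    and XR_strict: "strictly_convex_set (closure XR)"
    and x0_int: "x0 \<in> interior XR"
    and astar_meas: "\<And>t. t < T \<Longrightarrow> astar t \<in> borel_measurable borel"
    and astar_argmax: "\<And>t x. t < T \<Longrightarrow> x \<in> frontier XR \<Longrightarrow>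
          astar t x \<in> A t x \<and> (\<forall>b\<in>A t x. f t x b \<le> f t x (astar t x))"
    and ahat_meas: "\<And>t. t < T \<Longrightarrow> ahat t \<in> borel_measurable borel"
    and ahat_sel: "\<And>t x. t < T \<Longrightarrow> x \<in> Xs \<Longrightarrow> ahat t x \<in> A t x"
  shows "(\<forall>a \<in> adm M F T A H K x0 eps. \<exists>a' \<in> adm_R M F T XR A H K x0 eps.
            AE \<omega> in M. \<forall>t\<le>T. trunc_proc XR H K x0 eps a t \<omega> = trunc_proc XR H K x0 eps a' t \<omega>)
       \<and> (\<forall>a' \<in> adm_R M F T XR A H K x0 eps. \<exists>a \<in> adm M F T A H K x0 eps.
            AE \<omega> in M. \<forall>t\<le>T. trunc_proc XR H K x0 eps a t \<omega> = trunc_proc XR H K x0 eps a' t \<omega>)"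
proof -
  have cvx: "convex (closure XR)" by (rule strict_convex_imp_convex[OF XR_strict])
  have ne: "interior XR \<noteq> {}" using x0_int by auto
  have sp: "\<And>s. space (F s) = space M" using filt_sub by (simp add: subalgebra_def)
  note TM = trunc_meas[OF cvx ne K_meas H_meas filt_mono sp]
  note TI = trunc_interior_state[OF cvx x0_int]
  note TC = trunc_closure[OF cvx x0_int]
  have part1: "\<exists>a' \<in> adm_R M F T XR A H K x0 eps.
            AE \<omega> in M. \<forall>t\<le>T. trunc_proc XR H K x0 eps a t \<omega> = trunc_proc XR H K x0 eps a' t \<omega>"
    if aA: "a \<in> adm M F T A H K x0 eps" for a
  proof -
    define a' where "a' = (\<lambda>t \<omega>. if trunc_proc XR H K x0 eps a t \<omega> \<in> interior XR then a t \<omega>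
        else astar t (trunc_proc XR H K x0 eps a t \<omega>))"
    have eqR: "trunc_proc XR H K x0 eps a' t \<omega> = trunc_proc XR H K x0 eps a t \<omega>" for t \<omega>
      by (rule trunc_cong) (simp add: a'_def)
    have "a' \<in> adm_R M F T XR A H K x0 eps"
      unfolding adm_R_def
    proof (intro CollectI allI impI conjI ballI)
      fix t assume t: "t < T"
      have trm: "trunc_proc XR H K x0 eps a t \<in> borel_measurable (F t)"
        by (rule TM) (use aA t eps_meas in \<open>auto simp: adm_def\<close>)
      have at: "a t \<in> borel_measurable (F t)" using aA t by (simp add: adm_def)
      have ast: "(\<lambda>\<omega>. astar t (trunc_proc XR H K x0 eps a t \<omega>)) \<in> borel_measurable (F t)"
        using measurable_compose[OF trm astar_meas[OF t]] by simp
      show "a' t \<in> borel_measurable (F t)"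
        unfolding a'_def by (rule measurable_If[OF at ast]) (rule pred_in[OF trm], simp)
      fix \<omega> assume \<omega>: "\<omega> \<in> space M"
      show "a' t \<omega> \<in> A t (trunc_proc XR H K x0 eps a' t \<omega>)"
      proof (cases "trunc_proc XR H K x0 eps a t \<omega> \<in> interior XR")
        case True
        then show ?thesis using TI[OF True] aA t \<omega> eqR by (simp add: a'_def adm_def)
      next
        case False
        then have "trunc_proc XR H K x0 eps a t \<omega> \<in> frontier XR" using TC by (simp add: frontier_def)
        then show ?thesis using False astar_argmax[OF t] eqR by (simp add: a'_def)
      qed
    qed
    moreover have "AE \<omega> in M. \<forall>t\<le>T. trunc_proc XR H K x0 eps a t \<omega> = trunc_proc XR H K x0 eps a' t \<omega>"
      using eqR by simp
    ultimately show ?thesis by blast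
  qed
  have part2: "\<exists>a \<in> adm M F T A H K x0 eps.
            AE \<omega> in M. \<forall>t\<le>T. trunc_proc XR H K x0 eps a t \<omega> = trunc_proc XR H K x0 eps a' t \<omega>"
    if aR: "a' \<in> adm_R M F T XR A H K x0 eps" for a'
  proof -
    define g where "g = (\<lambda>t \<omega> x. if trunc_proc XR H K x0 eps a' t \<omega> \<in> interior XR then a' t \<omega>
        else ahat t x)"
    define a where "a = (\<lambda>t \<omega>. g t \<omega> (fb_proc H K x0 eps g t \<omega>))"
    have eqR: "trunc_proc XR H K x0 eps a t \<omega> = trunc_proc XR H K x0 eps a' t \<omega>" for t \<omega>
      by (rule trunc_cong) (simp add: a_def g_def)
    have st: "state_proc H K x0 eps a t \<omega> = fb_proc H K x0 eps g t \<omega>" for t \<omega>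
      unfolding a_def by (rule state_fb)
    have trm: "trunc_proc XR H K x0 eps a' t \<in> borel_measurable (F t)" if t: "t \<le> T" for t
      by (rule TM) (use aR t eps_meas in \<open>auto simp: adm_R_def\<close>)
    have am: "a t \<in> borel_measurable (F t)"
      if t: "t < T" and fbm: "fb_proc H K x0 eps g t \<in> borel_measurable (F t)" for t
    proof -
      have at: "a' t \<in> borel_measurable (F t)" using aR t by (simp add: adm_R_def)
      have ah: "(\<lambda>\<omega>. ahat t (fb_proc H K x0 eps g t \<omega>)) \<in> borel_measurable (F t)"
        using measurable_compose[OF fbm ahat_meas[OF t]] by simp
      have m: "(\<lambda>\<omega>. if trunc_proc XR H K x0 eps a' t \<omega> \<in> interior XR then a' t \<omega>
          else ahat t (fb_proc H K x0 eps g t \<omega>)) \<in> borel_measurable (F t)"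
        by (rule measurable_If[OF at ah]) (rule pred_in[OF trm], use t in auto)
      have eq: "a t = (\<lambda>\<omega>. if trunc_proc XR H K x0 eps a' t \<omega> \<in> interior XR then a' t \<omega>
          else ahat t (fb_proc H K x0 eps g t \<omega>))"
        by (simp add: a_def g_def fun_eq_iff)
      show ?thesis by (subst eq) (rule m)
    qed
    have fbm: "fb_proc H K x0 eps g t \<in> borel_measurable (F t)" if "t \<le> T" for t
      using that
    proof (induction t)
      case 0
      then show ?case by simp
    next
      case (Suc t)
      then have t: "t < T" by simp
      have x: "fb_proc H K x0 eps g t \<in> borel_measurable (F (Suc t))"
        using Suc by (intro lift_meas[OF filt_mono sp[of t, folded sp[of "Suc t"]]]) auto
      have b: "a t \<in> borel_measurable (F (Suc t))"
        using am[OF t] Suc by (intro lift_meas[OF filt_mono sp[of t, folded sp[of "Suc t"]]]) auto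
      have e: "eps (Suc t) \<in> borel_measurable (F (Suc t))" using eps_meas Suc.prems by auto
      have "(\<lambda>\<omega>. H (K (fb_proc H K x0 eps g t \<omega>, a t \<omega>)) (eps (Suc t) \<omega>)) \<in> borel_measurable (F (Suc t))"
        by (rule meas_step[OF K_meas H_meas x b e])
      then show ?case by (simp add: a_def)
    qed
    have cons: "a t \<omega> \<in> A t (state_proc H K x0 eps a t \<omega>)"
      if t: "t < T" and \<omega>: "\<omega> \<in> space M" and xs: "state_proc H K x0 eps a t \<omega> \<in> Xs" for t \<omega>
    proof (cases "trunc_proc XR H K x0 eps a' t \<omega> \<in> interior XR")
      case True
      then have "trunc_proc XR H K x0 eps a t \<omega> \<in> interior XR" using eqR by simp
      from TI[OF this] have "state_proc H K x0 eps a t \<omega> = trunc_proc XR H K x0 eps a' t \<omega>"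
        using eqR by simp
      then show ?thesis using True aR t \<omega> by (simp add: adm_R_def a_def g_def)
    next
      case False
      then show ?thesis using ahat_sel[OF t xs] st by (simp add: a_def g_def)
    qed
    have xs: "state_proc H K x0 eps a t \<omega> \<in> Xs" if "t \<le> T" "\<omega> \<in> space M" for t \<omega>
      using that
    proof (induction t)
      case 0
      then show ?case using x0_int interior_subset XR_sub by auto
    next
      case (Suc t)
      then have t: "t < T" by simp
      have "state_proc H K x0 eps a t \<omega> \<in> Xs" using Suc by simp
      then show ?case using state_space[OF t _ cons[OF t Suc.prems(2)]] by simp
    qed
    have "a \<in> adm M F T A H K x0 eps"
      unfolding adm_def
    proof (intro CollectI allI impI conjI ballI)
      fix t assume t: "t < T"
      show "a t \<in> borel_measurable (F t)" using am[OF t fbm] t by simp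
      fix \<omega> assume \<omega>: "\<omega> \<in> space M"
      show "a t \<omega> \<in> A t (state_proc H K x0 eps a t \<omega>)"
        using cons[OF t \<omega> xs] t \<omega> by simp
    qed
    moreover have "AE \<omega> in M. \<forall>t\<le>T. trunc_proc XR H K x0 eps a t \<omega> = trunc_proc XR H K x0 eps a' t \<omega>"
      using eqR by simp
    ultimately show ?thesis by blast
  qed
  show ?thesis using part1 part2 by blast
qed

end
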